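(* Let $\mu$ be a strict partition and $g$ a function from strict partitions to $\mathbb{C}$. For $n\ge0$ let $$A(n)=\sum_{|\lambda/\mu|=n}f'_{\lambda/\mu}\,g(\lambda),\qquad B(n)=\sum_{|\lambda/\mu|=n}f'_{\lambda/\mu}\,Dg(\lambda),$$ the sums ranging over strict partitions $\lambda\supseteq\mu$ with $|\lambda|-|\mu|=n$. Then $A(n)=A(0)+\sum_{k=0}^{n-1}B(k)$ for all $n\ge0$.
   Context: A strict partition is a finite strictly decreasing sequence of positive integers $\lambda=(\lambda_1>\cdots>\lambda_\ell)$ (the empty sequence is allowed); $|\lambda|=\sum_i\lambda_i$, $\ell(\lambda)=\ell$, and $\lambda_i=0$ for $i>\ell(\lambda)$. The (shifted Young) diagram of $\lambda$ is the set of boxes $(i,j)$ with $1\le i\le\ell(\lambda)$, $i+1\le j\le i+\lambda_i$; $\lambda$ is identified with its diagram. Write $\lambda\supseteq\mu$ if $\lambda_i\ge\mu_i$ for all $i$; $\lambda/\mu$ is the set of boxes of $\lambda$ not in $\mu$, and $|\lambda/\mu|=|\lambda|-|\mu|$. $f_{\lambda/\mu}$ is the number of standard shifted Young tableaux of shape $\lambda/\mu$, i.e. bijective fillings of the boxes of $\lambda/\mu$ with $1,\dots,|\lambda/\mu|$ increasing from left to right along rows and from top to bottom along columns ($f_{\mu/\mu}=1$), and $f'_{\lambda/\mu}=2^{|\lambda|-|\mu|-\ell(\lambda)+\ell(\mu)}f_{\lambda/\mu}$. For a strict partition $\lambda$, $\lambda^+$ denotes any strict partition obtained from $\lambda$ by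 adding one box ($\lambda^+\supseteq\lambda$, $|\lambda^+|=|\lambda|+1$). The difference operator $D$ on functions $g$ of strict partitions is $$Dg(\lambda)=\sum_{\lambda^+:\ \ell(\lambda^+)>\ell(\lambda)}g(\lambda^+)+2\sum_{\lambda^+:\ \ell(\lambda^+)=\ell(\lambda)}g(\lambda^+)-g(\lambda).$$ *)

theory Defs
  imports Complex_Main
begin

text \<open>Strict partitions are represented as lists of naturals, strictly decreasing
  with positive entries; lambda_i is the (i-1)-th list entry for 1 <= i <= length,
  and 0 otherwise.\<close>

definition strict_part :: "nat list \<Rightarrow> bool" where
  "strict_part la \<longleftrightarrow> sorted_wrt (>) la \<and> (\<forall>x\<in>set la. 0 < x)"

definition part_at :: "nat list \<Rightarrow> nat \<Rightarrow> nat" where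
  "part_at la i = (if 1 \<le> i \<and> i \<le> length la then la ! (i - 1) else 0)"

definition part_size :: "nat list \<Rightarrow> nat" where
  "part_size la = sum_list la"

definition part_contains :: "nat list \<Rightarrow> nat list \<Rightarrow> bool" where
  "part_contains la mu \<longleftrightarrow> (\<forall>i. part_at mu i \<le> part_at la i)"

definition shifted_diagram :: "nat list \<Rightarrow> (nat \<times> nat) set" where
  "shifted_diagram la =
     {(i, j). 1 \<le> i \<and> i \<le> length la \<and> i + 1 \<le> j \<and> j \<le> i + part_at la i}"

definition standard_tableaux :: "(nat \<times> nat) set \<Rightarrow> ((nat \<times> nat) \<Rightarrow> nat) set" where
  "standard_tableaux S =
     {T. bij_betw T S {1..card S} \<and> (\<forall>x. x \<notin> S \<longrightarrow> T x = 0)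
        \<and> (\<forall>i j j'. (i, j) \<in> S \<and> (i, j') \<in> S \<and> j < j' \<longrightarrow> T (i, j) < T (i, j'))
        \<and> (\<forall>i i' j. (i, j) \<in> S \<and> (i', j) \<in> S \<and> i < i' \<longrightarrow> T (i, j) < T (i', j))}"

definition f_skew :: "nat list \<Rightarrow> nat list \<Rightarrow> nat" where
  "f_skew la mu = card (standard_tableaux (shifted_diagram la - shifted_diagram mu))"

definition f'_skew :: "nat list \<Rightarrow> nat list \<Rightarrow> complex" where
  "f'_skew la mu =
     (2::complex) powi (int (part_size la) - int (part_size mu) - int (length la) + int (length mu))
     * of_nat (f_skew la mu)"

definition add_box :: "nat list \<Rightarrow> nat list set" where
  "add_box la = {nu. strict_part nu \<and> part_contains nu la \<and> part_size nu = part_size la + 1}"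

definition Dop :: "(nat list \<Rightarrow> complex) \<Rightarrow> nat list \<Rightarrow> complex" where
  "Dop g la =
     (\<Sum>nu\<in>{nu\<in>add_box la. length nu > length la}. g nu)
     + 2 * (\<Sum>nu\<in>{nu\<in>add_box la. length nu = length la}. g nu) - g la"

definition skew_set :: "nat list \<Rightarrow> nat \<Rightarrow> nat list set" where
  "skew_set mu n = {la. strict_part la \<and> part_contains la mu \<and> part_size la = part_size mu + n}"

end

theory Submission
  imports Defs "HOL-Library.FuncSet"
begin

abbreviation p where "p \<equiv> part_at"
abbreviation DD where "DD \<equiv> shifted_diagram"

lemma part_at_pos: "0 < part_at la i \<Longrightarrow> 1 \<le> i \<and> i \<le> length la"
  unfolding part_at_def by (auto split: if_splits)

lemma part_at_0[simp]: "part_at la 0 = 0"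
  unfolding part_at_def by auto

lemma part_at_big: "length la < i \<Longrightarrow> part_at la i = 0"
  unfolding part_at_def by auto

lemma strict_pos: "strict_part la \<Longrightarrow> 1 \<le> i \<Longrightarrow> i \<le> length la \<Longrightarrow> 0 < part_at la i"
  unfolding part_at_def strict_part_def by auto

lemma strict_nth_gap:
  assumes "sorted_wrt (>) (la::nat list)" "j < length la" "i < j"
  shows "la ! j + (j - i) \<le> la ! i"
  using assms(2,3)
proof (induction j)
  case 0 then show ?case by simp
next
  case (Suc j)
  have lt: "la ! Suc j < la ! j" using assms(1) Suc.prems by (simp add: sorted_wrt_iff_nth_less)
  show ?case
  proof (cases "i = j")
    case True then show ?thesis using lt by simp
  next
    case False
    then have "la ! j + (j - i) \<le> la ! i" using Suc by simp
    then show ?thesis using lt False Suc.prems by linarith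
  qed
qed

lemma strict_dec:
  assumes "strict_part la" "1 \<le> i" "i < j" "0 < part_at la j"
  shows "part_at la j + (j - i) \<le> part_at la i"
proof -
  have j: "j \<le> length la" using part_at_pos[OF assms(4)] by simp
  have "la ! (j-1) + ((j-1) - (i-1)) \<le> la ! (i-1)"
    using assms j by (intro strict_nth_gap) (auto simp: strict_part_def)
  then show ?thesis using assms j unfolding part_at_def by auto
qed

lemma diag_alt: "shifted_diagram la = {(i,j). 1 \<le> i \<and> i+1 \<le> j \<and> j \<le> i + part_at la i}"
  unfolding shifted_diagram_def using part_at_pos[of la] by fastforce

lemma part_eq:
  assumes "strict_part a" "strict_part b" "\<And>i. part_at a i = part_at b i"
  shows "a = b"
proof -
  have "length a = length b"
  proof (rule ccontr)
    assume "length a \<noteq> length b"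
    then consider "length a < length b" | "length b < length a" by linarith
    then show False
    proof cases
      case 1
      then show False using strict_pos[OF assms(2), of "length b"] part_at_big[OF 1] assms(3)[of "length b"] by simp
    next
      case 2
      then show False using strict_pos[OF assms(1), of "length a"] part_at_big[OF 2] assms(3)[of "length a"] by simp
    qed
  qed
  moreover have "a ! k = b ! k" if "k < length a" for k
    using assms(3)[of "Suc k"] that \<open>length a = length b\<close> unfolding part_at_def by auto
  ultimately show ?thesis by (simp add: nth_equalityI)
qed

lemma diag_inj: assumes "shifted_diagram a = shifted_diagram b" shows "part_at a i = part_at b i"
proof -
  have le: "part_at x i \<le> part_at y i" if "shifted_diagram x = shifted_diagram y" for x y
  proof (cases "part_at x i = 0")
    case False
    then have "1 \<le> i" using part_at_pos[of x i] by simp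
    then have "(i, i + part_at x i) \<in> shifted_diagram x" using False by (simp add: diag_alt)
    then have "(i, i + part_at x i) \<in> shifted_diagram y" using that by simp
    then show ?thesis by (simp add: diag_alt)
  qed simp
  show ?thesis using le[OF assms] le[OF assms[symmetric]] by simp
qed

lemma contains_diag: "part_contains nu la \<Longrightarrow> shifted_diagram la \<subseteq> shifted_diagram nu"
  unfolding part_contains_def diag_alt by (auto intro: order_trans)

lemma sum_part: assumes "length la \<le> M" shows "part_size la = (\<Sum>i\<in>{1..M}. part_at la i)"
proof -
  have "part_size la = (\<Sum>i<length la. la ! i)" by (simp add: part_size_def sum_list_sum_nth atLeast0LessThan)
  also have "\<dots> = (\<Sum>i\<in>{1..length la}. part_at la i)"
    by (rule sum.reindex_bij_witness[where i="\<lambda>i. i - 1" and j="Suc"]) (auto simp: part_at_def)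
  also have "\<dots> = (\<Sum>i\<in>{1..M}. part_at la i)"
    by (rule sum.mono_neutral_left) (use assms in \<open>auto simp: part_at_big\<close>)
  finally show ?thesis .
qed


lemma contains_len: assumes "strict_part la" "part_contains nu la" shows "length la \<le> length nu"
proof (cases "length la = 0")
  case False
  then have "0 < part_at la (length la)" using strict_pos[OF assms(1), of "length la"] by (simp add: Suc_le_eq)
  then have "0 < part_at nu (length la)" using assms(2) unfolding part_contains_def
    by (metis order_less_le_trans)
  then show ?thesis using part_at_pos by blast
qed simp

lemma one_box:
  assumes "strict_part la" "strict_part nu" "part_contains nu la" "part_size nu = part_size la + 1"
  shows "\<exists>r\<ge>1. part_at nu r = Suc (part_at la r) \<and> (\<forall>i. i \<noteq> r \<longrightarrow> part_at nu i = part_at la i)"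
proof -
  define M where "M = length nu"
  have lM: "length la \<le> M" using contains_len[OF assms(1,3)] M_def by simp
  have le: "part_at la i \<le> part_at nu i" for i using assms(3) by (simp add: part_contains_def)
  have "(\<Sum>i\<in>{1..M}. part_at nu i) = (\<Sum>i\<in>{1..M}. part_at la i) + 1"
    using assms(4) sum_part[OF lM] sum_part[of nu M] M_def by simp
  then have "(\<Sum>i\<in>{1..M}. part_at nu i - part_at la i) = Suc 0"
    using le by (simp add: sum_subtractf_nat)
  then obtain r where r: "r \<in> {1..M}" "part_at nu r - part_at la r = Suc 0"
    "\<forall>b\<in>{1..M}. r \<noteq> b \<longrightarrow> part_at nu b - part_at la b = 0"
    by (subst (asm) sum_eq_Suc0_iff) auto
  have "part_at nu i = part_at la i" if "i \<noteq> r" for i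
  proof (cases "i \<in> {1..M}")
    case True then show ?thesis using r(3) that le[of i] by force
  next
    case False
    then have "i = 0 \<or> M < i" by auto
    then show ?thesis using lM M_def part_at_big[of nu i] part_at_big[of la i] by auto
  qed
  then show ?thesis using r(1,2) le[of r] by (intro exI[of _ r]) auto
qed

lemma diff_box:
  assumes "1 \<le> r" "part_at nu r = Suc (part_at la r)" "\<forall>i. i \<noteq> r \<longrightarrow> part_at nu i = part_at la i"
  shows "shifted_diagram nu - shifted_diagram la = {(r, r + part_at nu r)}"
    "shifted_diagram la \<subseteq> shifted_diagram nu"
proof -
  have le: "part_at la i \<le> part_at nu i" for i using assms by (cases "i = r") auto
  show "shifted_diagram la \<subseteq> shifted_diagram nu"
    unfolding diag_alt using le by (auto intro: order_trans add_left_mono)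
  show "shifted_diagram nu - shifted_diagram la = {(r, r + part_at nu r)}"
  proof (rule set_eqI, clarify)
    fix i j
    show "((i, j) \<in> shifted_diagram nu - shifted_diagram la) = ((i, j) \<in> {(r, r + part_at nu r)})"
    proof (cases "i = r")
      case True
      then show ?thesis using assms unfolding diag_alt by auto
    next
      case False
      then show ?thesis using assms unfolding diag_alt by auto
    qed
  qed
qed

lemma corner:
  assumes "strict_part la" "1 \<le> r" "part_at nu r = Suc (part_at la r)"
    "\<forall>i. i \<noteq> r \<longrightarrow> part_at nu i = part_at la i"
  shows "\<And>j. r + part_at nu r < j \<Longrightarrow> (r, j) \<notin> shifted_diagram nu"
    "\<And>i'. r < i' \<Longrightarrow> (i', r + part_at nu r) \<notin> shifted_diagram nu"
proof -
  fix j assume "r + part_at nu r < j" then show "(r, j) \<notin> shifted_diagram nu" by (simp add: diag_alt)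
next
  fix i' assume ri: "r < i'"
  show "(i', r + part_at nu r) \<notin> shifted_diagram nu"
  proof
    assume "(i', r + part_at nu r) \<in> shifted_diagram nu"
    then have h: "r + part_at nu r \<le> i' + part_at la i'" "i' + 1 \<le> r + part_at nu r"
      using assms(4) ri by (auto simp: diag_alt)
    then have "0 < part_at la i'" using assms(3) by linarith
    from strict_dec[OF assms(1,2) ri this] h assms(3) ri show False by linarith
  qed
qed


lemma remove_box:
  assumes "strict_part nu" "1 \<le> r" "1 \<le> part_at nu r"
    "part_at nu (r+1) = 0 \<or> part_at nu (r+1) + 1 < part_at nu r"
  shows "\<exists>la. strict_part la \<and> part_at la r = part_at nu r - 1 \<and> (\<forall>i. i \<noteq> r \<longrightarrow> part_at la i = part_at nu i)"
proof -
  have rl: "r \<le> length nu" using part_at_pos[of nu r] assms(3) by simp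
  have srt: "sorted_wrt (>) nu" and pos: "\<forall>x\<in>set nu. 0 < x" using assms(1) by (auto simp: strict_part_def)
  show ?thesis
  proof (cases "part_at nu r = 1")
    case True
    then have "part_at nu (r+1) = 0" using assms(4) by linarith
    then have "\<not> (r + 1 \<le> length nu)" using strict_pos[OF assms(1), of "r+1"] by auto
    then have rlen: "r = length nu" using rl by simp
    define la where "la = take (length nu - 1) nu"
    have "strict_part la" unfolding la_def strict_part_def using srt pos
      by (auto dest: in_set_takeD)
    moreover have "part_at la i = (if i = r then 0 else part_at nu i)" for i
      unfolding la_def part_at_def using rlen by auto
    ultimately show ?thesis using True by (intro exI[of _ la]) auto
  next
    case False
    then have ge2: "2 \<le> part_at nu r" using assms(3) by linarith
    define x where "x = nu ! (r - 1) - 1"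
    define la where "la = nu[r - 1 := x]"
    have nur: "part_at nu r = nu ! (r-1)" using rl assms(2) by (simp add: part_at_def)
    have gap: "nu ! r + 1 < nu ! (r-1)" if "r < length nu"
    proof -
      have "0 < part_at nu (r+1)" using strict_pos[OF assms(1), of "r+1"] that by simp
      then have "part_at nu (r+1) + 1 < part_at nu r" using assms(4) by simp
      moreover have "part_at nu (r+1) = nu ! r" using that by (simp add: part_at_def)
      ultimately show ?thesis using nur by simp
    qed
    have mono: "nu ! j \<le> nu ! r" if "r \<le> j" "j < length nu" for j
      proof (cases "j = r")
      case False
      then have "r < j" using that by simp
      then show ?thesis using srt that by (auto simp: sorted_wrt_iff_nth_less intro: less_imp_le)
    qed simp
    have "sorted_wrt (>) la" unfolding sorted_wrt_iff_nth_less
    proof (intro allI impI)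
      fix i j assume ij: "i < j" "j < length la"
      then have jl: "j < length nu" by (simp add: la_def)
      show "la ! j < la ! i"
      proof (cases "i = r - 1")
        case True
        then have "j \<noteq> r - 1" "r \<le> j" using ij assms(2) by auto
        then show ?thesis using True jl gap[of] mono[of j] rl ij unfolding la_def x_def
          by (auto simp: nth_list_update)
      next
        case False
        have "nu ! j < nu ! i" using srt ij jl by (auto simp: sorted_wrt_iff_nth_less)
        then show ?thesis using False jl ij unfolding la_def x_def
          by (cases "j = r - 1") (auto simp: nth_list_update)
      qed
    qed
    moreover have "\<forall>y\<in>set la. 0 < y"
    proof
      fix y assume "y \<in> set la"
      then have "y \<in> insert x (set nu)" using set_update_subset_insert unfolding la_def by fast
      then show "0 < y" using pos ge2 nur x_def by auto
    qed
    moreover have "part_at la i = (if i = r then part_at nu r - 1 else part_at nu i)" for i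
      unfolding la_def part_at_def using rl assms(2) x_def by (auto simp: nth_list_update)
    ultimately show ?thesis by (intro exI[of _ la]) (auto simp: strict_part_def)
  qed
qed


lemma ST_finite: assumes "finite S" shows "finite (standard_tableaux S)"
proof -
  let ?e = "\<lambda>f x. if x \<in> S then f x else (0::nat)"
  have "standard_tableaux S \<subseteq> ?e ` (PiE S (\<lambda>_. {0..card S}))"
  proof
    fix T assume T: "T \<in> standard_tableaux S"
    then have "T = ?e (restrict T S)" unfolding standard_tableaux_def by (auto simp: fun_eq_iff)
    moreover have "restrict T S \<in> PiE S (\<lambda>_. {0..card S})"
      using T unfolding standard_tableaux_def bij_betw_def by auto
    ultimately show "T \<in> ?e ` (PiE S (\<lambda>_. {0..card S}))" by blast
  qed
  moreover have "finite (?e ` (PiE S (\<lambda>_. {0..card S})))" using assms by (intro finite_imageI finite_PiE) auto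
  ultimately show ?thesis by (rule finite_subset)
qed

lemma ST_remove:
  assumes fin: "finite S" and bS: "b \<in> S"
    and rowc: "\<And>j. (fst b, j) \<in> S \<Longrightarrow> j \<le> snd b" and colc: "\<And>i. (i, snd b) \<in> S \<Longrightarrow> i \<le> fst b"
  shows "card {T \<in> standard_tableaux S. T b = card S} = card (standard_tableaux (S - {b}))"
proof -
  define N where "N = card S"
  have N1: "1 \<le> N" using fin bS N_def by (simp add: Suc_le_eq card_gt_0_iff; blast)
  have cS': "card (S - {b}) = N - 1" using fin bS N_def by simp
  define A where "A = {T \<in> standard_tableaux S. T b = N}"
  define B where "B = standard_tableaux (S - {b})"
  have "bij_betw (\<lambda>T. T(b:=0)) A B"
  proof (rule bij_betw_byWitness[where f'="\<lambda>T. T(b:=N)"])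
    show "\<forall>T\<in>A. (T(b:=0))(b:=N) = T" unfolding A_def by auto
    show "\<forall>T\<in>B. (T(b:=N))(b:=0) = T" unfolding B_def standard_tableaux_def by (auto simp: fun_eq_iff)
    show "(\<lambda>T. T(b:=0)) ` A \<subseteq> B"
    proof clarify
      fix T assume "T \<in> A"
      then have T: "bij_betw T S {1..N}" "\<forall>x. x \<notin> S \<longrightarrow> T x = 0"
        "\<forall>i j j'. (i, j) \<in> S \<and> (i, j') \<in> S \<and> j < j' \<longrightarrow> T (i, j) < T (i, j')"
        "\<forall>i i' j. (i, j) \<in> S \<and> (i', j) \<in> S \<and> i < i' \<longrightarrow> T (i, j) < T (i', j)" "T b = N"
        unfolding A_def standard_tableaux_def N_def by auto
      have "bij_betw T (S - {b}) ({1..N} - {N})"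
        using bij_betw_DiffI[OF T(1), of "{b}" "{N}"] T(5) bS bij_betwE[OF T(1)] N1
        by (simp add: bij_betw_def)
      moreover have "{1..N} - {N} = {1..N-1}" using N1 by auto
      ultimately have "bij_betw (T(b:=0)) (S - {b}) {1..N-1}"
        by (metis (no_types, lifting) Diff_iff bij_betw_cong fun_upd_other singletonI)
      then show "T(b:=0) \<in> B" unfolding B_def standard_tableaux_def cS' using T(2-4) by auto
    qed
    show "(\<lambda>T. T(b:=N)) ` B \<subseteq> A"
    proof clarify
      fix T assume "T \<in> B"
      then have T: "bij_betw T (S - {b}) {1..N-1}" "\<forall>x. x \<notin> S - {b} \<longrightarrow> T x = 0"
        "\<forall>i j j'. (i, j) \<in> S - {b} \<and> (i, j') \<in> S - {b} \<and> j < j' \<longrightarrow> T (i, j) < T (i, j')"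
        "\<forall>i i' j. (i, j) \<in> S - {b} \<and> (i', j) \<in> S - {b} \<and> i < i' \<longrightarrow> T (i, j) < T (i', j)"
        unfolding B_def standard_tableaux_def cS' by auto
      have lt: "T x < N" if "x \<in> S - {b}" for x proof -
        have "T x \<in> {1..N-1}" using bij_betwE[OF T(1)] that by blast
        then show ?thesis using N1 by auto
      qed
      have "bij_betw (T(b:=N)) S {1..N}"
        unfolding bij_betw_def
      proof
        show "inj_on (T(b:=N)) S"
          using T(1) lt unfolding bij_betw_def inj_on_def by (metis Diff_iff fun_upd_apply less_irrefl singletonD)
        have "T ` (S - {b}) = {1..N-1}" using T(1) by (simp add: bij_betw_def)
        then have "(T(b:=N)) ` S = insert N {1..N-1}" using bS
          by (smt (verit, ccfv_threshold) Diff_iff fun_upd_image insert_Diff singletonI)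
        also have "\<dots> = {1..N}" using N1 by auto
        finally show "(T(b:=N)) ` S = {1..N}" .
      qed
      moreover have "\<forall>i j j'. (i, j) \<in> S \<and> (i, j') \<in> S \<and> j < j' \<longrightarrow> (T(b:=N)) (i, j) < (T(b:=N)) (i, j')"
      proof (intro allI impI)
        fix i j j' assume h: "(i, j) \<in> S \<and> (i, j') \<in> S \<and> j < j'"
        show "(T(b:=N)) (i, j) < (T(b:=N)) (i, j')"
        proof (cases "(i,j) = b")
          case True then show ?thesis using rowc[of j'] h by auto
        next
          case False
          then show ?thesis using h lt[of "(i,j)"] T(3) by auto
        qed
      qed
      moreover have "\<forall>i i' j. (i, j) \<in> S \<and> (i', j) \<in> S \<and> i < i' \<longrightarrow> (T(b:=N)) (i, j) < (T(b:=N)) (i', j)"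
      proof (intro allI impI)
        fix i i' j assume h: "(i, j) \<in> S \<and> (i', j) \<in> S \<and> i < i'"
        show "(T(b:=N)) (i, j) < (T(b:=N)) (i', j)"
        proof (cases "(i,j) = b")
          case True then show ?thesis using colc[of i'] h by auto
        next
          case False
          then show ?thesis using h lt[of "(i,j)"] T(4) by auto
        qed
      qed
      ultimately show "T(b:=N) \<in> A" unfolding A_def standard_tableaux_def N_def using T(2) bS by auto
    qed
  qed
  then show ?thesis unfolding A_def B_def N_def by (rule bij_betw_same_card)
qed


lemma max_box:
  assumes smu: "strict_part mu" and snu: "strict_part nu"
    and S: "S = shifted_diagram nu - shifted_diagram mu"
    and T: "T \<in> standard_tableaux S" and bS: "(r, c) \<in> S" and Tb: "T (r, c) = card S"
  shows "1 \<le> r \<and> c = r + part_at nu r \<and> 1 \<le> part_at nu r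
     \<and> (part_at nu (r+1) = 0 \<or> part_at nu (r+1) + 1 < part_at nu r) \<and> part_at mu r < part_at nu r"
proof -
  have b1: "1 \<le> r" "r + 1 \<le> c" "c \<le> r + part_at nu r" "(r,c) \<notin> shifted_diagram mu"
    using bS S by (auto simp: diag_alt)
  have Tle: "T x \<le> card S" if "x \<in> S" for x
    using T that unfolding standard_tableaux_def bij_betw_def by auto
  have row: "\<And>j j'. (r, j) \<in> S \<Longrightarrow> (r, j') \<in> S \<Longrightarrow> j < j' \<Longrightarrow> T (r, j) < T (r, j')"
    and col: "\<And>i i' j. (i, j) \<in> S \<Longrightarrow> (i', j) \<in> S \<Longrightarrow> i < i' \<Longrightarrow> T (i, j) < T (i', j)"
    using T unfolding standard_tableaux_def by auto
  have c: "c = r + part_at nu r"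
  proof (rule ccontr)
    assume "c \<noteq> r + part_at nu r"
    then have "(r, c+1) \<in> shifted_diagram nu" using b1 by (auto simp: diag_alt)
    moreover have "(r, c+1) \<notin> shifted_diagram mu" using b1 by (auto simp: diag_alt)
    ultimately have "(r, c+1) \<in> S" using S by simp
    then show False using row[OF bS, of "c+1"] Tle[of "(r,c+1)"] Tb by simp
  qed
  have mr: "part_at mu r < part_at nu r" using b1 c by (auto simp: diag_alt)
  have gap: "part_at nu (r+1) = 0 \<or> part_at nu (r+1) + 1 < part_at nu r"
  proof (rule ccontr)
    assume a: "\<not> ?thesis"
    then have p1: "0 < part_at nu (r+1)" by simp
    have "part_at nu (r+1) + 1 \<le> part_at nu r" using strict_dec[OF snu b1(1) _ p1] by simp
    then have eq: "part_at nu (r+1) + 1 = part_at nu r" using a by simp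
    have "(r+1, c) \<in> shifted_diagram nu" using c eq p1 b1 by (auto simp: diag_alt)
    moreover have "(r+1, c) \<notin> shifted_diagram mu"
    proof
      assume "(r+1, c) \<in> shifted_diagram mu"
      then have "c \<le> r + 1 + part_at mu (r+1)" by (simp add: diag_alt)
      then have "part_at nu r - 1 \<le> part_at mu (r+1)" using c by simp
      then have q: "0 < part_at mu (r+1)" using p1 eq by simp
      have "part_at mu (r+1) + 1 \<le> part_at mu r" using strict_dec[OF smu b1(1) _ q] by simp
      then show False using mr eq \<open>part_at nu r - 1 \<le> part_at mu (r+1)\<close> by simp
    qed
    ultimately have "(r+1, c) \<in> S" using S by simp
    then show False using col[OF bS, of "r+1"] Tle[of "(r+1,c)"] Tb by simp
  qed
  show ?thesis using b1 c mr gap by simp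
qed


lemma length_le_size: "\<forall>x\<in>set xs. 0 < (x::nat) \<Longrightarrow> length xs \<le> sum_list xs"
  by (induction xs) auto

lemma finite_strict_size: "finite {la. strict_part la \<and> part_size la = m}"
proof (rule finite_subset)
  show "{la. strict_part la \<and> part_size la = m} \<subseteq> {xs. set xs \<subseteq> {0..m} \<and> length xs \<le> m}"
  proof
    fix la assume "la \<in> {la. strict_part la \<and> part_size la = m}"
    then show "la \<in> {xs. set xs \<subseteq> {0..m} \<and> length xs \<le> m}"
      using length_le_size[of la] member_le_sum_list[of _ la]
      by (auto simp: strict_part_def part_size_def)
  qed
  show "finite {xs. set xs \<subseteq> {0..m} \<and> length xs \<le> m}" by (rule finite_lists_length_le) simp
qed

lemma finite_skew_set: "finite (skew_set mu n)"
  by (rule finite_subset[OF _ finite_strict_size[of "part_size mu + n"]]) (auto simp: skew_set_def)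

lemma finite_add_box: "finite (add_box la)"
  by (rule finite_subset[OF _ finite_strict_size[of "part_size la + 1"]]) (auto simp: add_box_def)

lemma finite_diag: "finite (shifted_diagram la)"
proof (rule finite_subset)
  show "shifted_diagram la \<subseteq> {0..length la} \<times> {0..length la + sum_list la}"
  proof clarify
    fix i j assume "(i, j) \<in> shifted_diagram la"
    then have h: "1 \<le> i" "i \<le> length la" "j \<le> i + part_at la i" by (auto simp: shifted_diagram_def)
    then have "part_at la i \<le> sum_list la" unfolding part_at_def
      by (auto intro!: member_le_sum_list)
    then show "i \<in> {0..length la} \<and> j \<in> {0..length la + sum_list la}" using h by auto
  qed
qed simp

lemma contains_trans: "part_contains a b \<Longrightarrow> part_contains b c \<Longrightarrow> part_contains a c"
  unfolding part_contains_def by (meson order_trans)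

lemma f_rec:
  assumes smu: "strict_part mu" and nu: "nu \<in> skew_set mu (Suc k)"
  shows "f_skew nu mu = (\<Sum>la\<in>{la\<in>skew_set mu k. nu \<in> add_box la}. f_skew la mu)"
proof -
  have snu: "strict_part nu" and numu: "part_contains nu mu" and sznu: "part_size nu = part_size mu + Suc k"
    using nu by (auto simp: skew_set_def)
  define S where "S = shifted_diagram nu - shifted_diagram mu"
  define L where "L = {la\<in>skew_set mu k. nu \<in> add_box la}"
  define bx where "bx la = the_elem (shifted_diagram nu - shifted_diagram la)" for la
  have finS: "finite S" unfolding S_def using finite_diag by simp
  have finL: "finite L" unfolding L_def using finite_skew_set by simp
  have muS: "shifted_diagram mu \<subseteq> shifted_diagram nu" using contains_diag[OF numu] .
  have Lp: "strict_part la \<and> 1 \<le> r \<and> part_at nu r = Suc (part_at la r) \<and> (\<forall>i. i \<noteq> r \<longrightarrow> part_at nu i = part_at la i)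
      \<and> bx la = (r, r + part_at nu r) \<and> shifted_diagram la - shifted_diagram mu = S - {bx la} \<and> bx la \<in> S"
    if "la \<in> L" "1 \<le> r" "part_at nu r = Suc (part_at la r)" "\<forall>i. i \<noteq> r \<longrightarrow> part_at nu i = part_at la i" for la r
  proof -
    have sla: "strict_part la" and lamu: "part_contains la mu" using that(1) by (auto simp: L_def skew_set_def)
    note db = diff_box[OF that(2-4)]
    have bxe: "bx la = (r, r + part_at nu r)" using db(1) by (simp add: bx_def)
    have "shifted_diagram la = shifted_diagram nu - {(r, r + part_at nu r)}" using db by blast
    then have "shifted_diagram la = shifted_diagram nu - {bx la}" using bxe by simp
    moreover have "shifted_diagram mu \<subseteq> shifted_diagram la" using contains_diag[OF lamu] .
    ultimately show ?thesis using sla that bxe db unfolding S_def by blast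
  qed
  have Lex: "\<exists>r. 1 \<le> r \<and> part_at nu r = Suc (part_at la r) \<and> (\<forall>i. i \<noteq> r \<longrightarrow> part_at nu i = part_at la i)"
    if "la \<in> L" for la
    using that one_box[of la nu] by (auto simp: L_def skew_set_def add_box_def)
  define P where "P la = {T \<in> standard_tableaux S. T (bx la) = card S}" for la
  have cardP: "card (P la) = f_skew la mu" if laL0: "la \<in> L" for la
  proof -
    obtain r where r: "1 \<le> r" "part_at nu r = Suc (part_at la r)" "\<forall>i. i \<noteq> r \<longrightarrow> part_at nu i = part_at la i"
      using Lex[OF laL0] by blast
    note lp = Lp[OF laL0 r]
    have sla: "strict_part la" and bxe: "bx la = (r, r + part_at nu r)" and bS: "bx la \<in> S"
      and dS: "shifted_diagram la - shifted_diagram mu = S - {bx la}" using lp by blast+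
    note cr = corner[OF sla r]
    have "card (P la) = card (standard_tableaux (S - {bx la}))"
      unfolding P_def
    proof (rule ST_remove[OF finS bS])
      fix j assume "(fst (bx la), j) \<in> S"
      then have "(r, j) \<in> shifted_diagram nu" using bxe by (simp add: S_def)
      then have "\<not> r + part_at nu r < j" using cr(1) by blast
      then show "j \<le> snd (bx la)" using bxe by simp
    next
      fix i assume "(i, snd (bx la)) \<in> S"
      then have "(i, r + part_at nu r) \<in> shifted_diagram nu" using bxe by (simp add: S_def)
      then have "\<not> r < i" using cr(2) by blast
      then show "i \<le> fst (bx la)" using bxe by simp
    qed
    then show ?thesis using dS by (simp add: f_skew_def)
  qed
  have cover: "standard_tableaux S = (\<Union>la\<in>L. P la)"
  proof
    show "(\<Union>la\<in>L. P la) \<subseteq> standard_tableaux S" unfolding P_def by auto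
    show "standard_tableaux S \<subseteq> (\<Union>la\<in>L. P la)"
    proof
      fix T assume T: "T \<in> standard_tableaux S"
      have "nu \<noteq> mu" using sznu by auto
      then have "shifted_diagram nu \<noteq> shifted_diagram mu"
        using diag_inj part_eq[OF snu smu] by blast
      then have "S \<noteq> {}" using muS S_def by blast
      then have "card S \<in> {1..card S}" using finS by (simp add: Suc_le_eq card_gt_0_iff)
      moreover have "T ` S = {1..card S}" using T unfolding standard_tableaux_def bij_betw_def by blast
      ultimately have "card S \<in> T ` S" by simp
      then obtain b where bS: "b \<in> S" and Tb: "T b = card S" by (elim imageE) simp
      obtain r c where bdef: "b = (r, c)" by fastforce
      note mb = max_box[OF smu snu S_def T bS[unfolded bdef] Tb[unfolded bdef]]
      have m1: "1 \<le> r" and m2: "c = r + part_at nu r" and m3: "1 \<le> part_at nu r"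
        and m4: "part_at nu (r+1) = 0 \<or> part_at nu (r+1) + 1 < part_at nu r"
        and m5: "part_at mu r < part_at nu r" using mb by blast+
      obtain la where la: "strict_part la" "part_at la r = part_at nu r - 1"
        "\<forall>i. i \<noteq> r \<longrightarrow> part_at la i = part_at nu i"
        using remove_box[OF snu m1 m3 m4] by blast
      have r3: "part_at nu r = Suc (part_at la r)" "\<forall>i. i \<noteq> r \<longrightarrow> part_at nu i = part_at la i"
        using la m3 by auto
      have nula: "part_contains nu la" unfolding part_contains_def
      proof
        fix i show "part_at la i \<le> part_at nu i" using r3 by (cases "i = r") auto
      qed
      have lamu: "part_contains la mu" unfolding part_contains_def
      proof
        fix i show "part_at mu i \<le> part_at la i"
        proof (cases "i = r")
          case True then show ?thesis using m5 la(2) by simp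
        next
          case False then show ?thesis using numu la(3) by (simp add: part_contains_def)
        qed
      qed
      define M where "M = length nu + length la"
      have rM: "r \<in> {1..M}" using m1 m3 part_at_pos[of nu r] M_def by auto
      have e1: "part_size nu = part_at nu r + (\<Sum>i\<in>{1..M}-{r}. part_at nu i)"
        using sum_part[of nu M] M_def rM by (simp add: sum.remove)
      have e2: "part_size la = part_at la r + (\<Sum>i\<in>{1..M}-{r}. part_at la i)"
        using sum_part[of la M] M_def rM by (simp add: sum.remove)
      have e3: "(\<Sum>i\<in>{1..M}-{r}. part_at nu i) = (\<Sum>i\<in>{1..M}-{r}. part_at la i)"
        using r3 by (intro sum.cong) auto
      have sz: "part_size nu = 1 + part_size la" using e1 e2 e3 r3 by simp
      have laL: "la \<in> L" unfolding L_def skew_set_def add_box_def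
        using la(1) lamu snu nula sz sznu by auto
      have "bx la = (r, r + part_at nu r)" using Lp[OF laL m1 r3] by blast
      then have "bx la = b" using m2 bdef by simp
      then have "T \<in> P la" unfolding P_def using T Tb by simp
      then show "T \<in> (\<Union>la\<in>L. P la)" using laL by blast
    qed
  qed
  have disj: "P l1 \<inter> P l2 = {}" if ll: "l1 \<in> L" "l2 \<in> L" "l1 \<noteq> l2" for l1 l2
  proof (rule ccontr)
    assume "P l1 \<inter> P l2 \<noteq> {}"
    then obtain T where T: "T \<in> standard_tableaux S" "T (bx l1) = card S" "T (bx l2) = card S"
      unfolding P_def by blast
    obtain r1 where r1: "1 \<le> r1" "part_at nu r1 = Suc (part_at l1 r1)" "\<forall>i. i \<noteq> r1 \<longrightarrow> part_at nu i = part_at l1 i"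
      using Lex[OF ll(1)] by blast
    obtain r2 where r2: "1 \<le> r2" "part_at nu r2 = Suc (part_at l2 r2)" "\<forall>i. i \<noteq> r2 \<longrightarrow> part_at nu i = part_at l2 i"
      using Lex[OF ll(2)] by blast
    note p1 = Lp[OF ll(1) r1] and p2 = Lp[OF ll(2) r2]
    have b1: "bx l1 \<in> S" and e1: "bx l1 = (r1, r1 + part_at nu r1)" and s1: "strict_part l1" using p1 by blast+
    have b2: "bx l2 \<in> S" and e2: "bx l2 = (r2, r2 + part_at nu r2)" and s2: "strict_part l2" using p2 by blast+
    have "inj_on T S" using T(1) unfolding standard_tableaux_def bij_betw_def by blast
    moreover have "T (bx l1) = T (bx l2)" using T(2,3) by simp
    ultimately have "bx l1 = bx l2" using b1 b2 by (rule inj_onD)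
    then have rr: "r1 = r2" using e1 e2 by simp
    have "part_at l1 i = part_at l2 i" for i
    proof (cases "i = r1")
      case True then show ?thesis using r1(2) r2(2) rr by simp
    next
      case False then show ?thesis using r1(3) r2(3) rr by simp
    qed
    then have "l1 = l2" by (rule part_eq[OF s1 s2])
    then show False using ll(3) by simp
  qed
  have finP: "finite (P la)" for la unfolding P_def using ST_finite[OF finS] by simp
  have "f_skew nu mu = card (\<Union>la\<in>L. P la)" unfolding f_skew_def S_def[symmetric] cover ..
  also have "\<dots> = (\<Sum>la\<in>L. card (P la))" using finL finP disj by (intro card_UN_disjoint) auto
  also have "\<dots> = (\<Sum>la\<in>L. f_skew la mu)" using cardP by simp
  finally show ?thesis unfolding L_def .
qed


lemma len_box:
  assumes sla: "strict_part la" and nu: "nu \<in> add_box la"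
  shows "length la \<le> length nu \<and> length nu \<le> length la + 1"
proof -
  have snu: "strict_part nu" and c: "part_contains nu la" and sz: "part_size nu = part_size la + 1"
    using nu by (auto simp: add_box_def)
  obtain r where r: "1 \<le> r" "part_at nu r = Suc (part_at la r)" "\<forall>i. i \<noteq> r \<longrightarrow> part_at nu i = part_at la i"
    using one_box[OF sla snu c sz] by blast
  have "length nu \<le> length la + 1"
  proof (rule ccontr)
    assume "\<not> ?thesis"
    then have h: "length la + 2 \<le> length nu" by simp
    have a1: "part_at nu (length la + 1) \<noteq> part_at la (length la + 1)"
      using strict_pos[OF snu, of "length la + 1"] part_at_big[of la "length la + 1"] h by simp
    have a2: "part_at nu (length la + 2) \<noteq> part_at la (length la + 2)"
      using strict_pos[OF snu, of "length la + 2"] part_at_big[of la "length la + 2"] h by simp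
    show False using r(3) a1 a2 by (metis add_left_cancel numeral_One numeral_eq_iff semiring_norm(85))
  qed
  then show ?thesis using contains_len[OF sla c] by simp
qed

definition wgt :: "nat list \<Rightarrow> nat list \<Rightarrow> complex" where
  "wgt la nu = (if length la < length nu then 1 else 2)"

lemma Dop_alt:
  assumes "strict_part la"
  shows "Dop g la = (\<Sum>nu\<in>add_box la. wgt la nu * g nu) - g la"
proof -
  let ?A = "{nu\<in>add_box la. length nu > length la}" and ?B = "{nu\<in>add_box la. length nu = length la}"
  have AB: "add_box la = ?A \<union> ?B" using len_box[OF assms] by fastforce
  have fin: "finite ?A" "finite ?B" using finite_add_box by auto
  have "(\<Sum>nu\<in>add_box la. wgt la nu * g nu) = (\<Sum>nu\<in>?A. wgt la nu * g nu) + (\<Sum>nu\<in>?B. wgt la nu * g nu)"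
    by (subst AB, rule sum.union_disjoint) (use fin in auto)
  also have "(\<Sum>nu\<in>?A. wgt la nu * g nu) = (\<Sum>nu\<in>?A. g nu)" by (intro sum.cong) (auto simp: wgt_def)
  also have "(\<Sum>nu\<in>?B. wgt la nu * g nu) = 2 * (\<Sum>nu\<in>?B. g nu)"
    by (simp add: sum_distrib_left wgt_def)
  finally show ?thesis unfolding Dop_def by simp
qed

definition ex2 :: "nat list \<Rightarrow> nat list \<Rightarrow> int" where
  "ex2 la mu = int (part_size la) - int (part_size mu) - int (length la) + int (length mu)"

lemma f'_alt: "f'_skew la mu = (2::complex) powi (ex2 la mu) * of_nat (f_skew la mu)"
  unfolding f'_skew_def ex2_def ..

lemma wgt_rel:
  assumes sla: "strict_part la" and nu: "nu \<in> add_box la"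
  shows "wgt la nu * (2::complex) powi (ex2 la mu) = 2 powi (ex2 nu mu)"
proof -
  have sz: "part_size nu = part_size la + 1" using nu by (simp add: add_box_def)
  consider "length nu = length la + 1" | "length nu = length la" using len_box[OF sla nu] by linarith
  then show ?thesis
  proof cases
    case 1
    then have "ex2 nu mu = ex2 la mu" using sz by (simp add: ex2_def)
    then show ?thesis using 1 by (simp add: wgt_def)
  next
    case 2
    then have "ex2 nu mu = ex2 la mu + 1" using sz by (simp add: ex2_def)
    then show ?thesis using 2 by (simp add: wgt_def power_int_add_1')
  qed
qed

lemma f'_rec:
  assumes smu: "strict_part mu" and nu: "nu \<in> skew_set mu (Suc k)"
  shows "f'_skew nu mu = (\<Sum>la\<in>{la\<in>skew_set mu k. nu \<in> add_box la}. wgt la nu * f'_skew la mu)"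
proof -
  have "(\<Sum>la\<in>{la\<in>skew_set mu k. nu \<in> add_box la}. wgt la nu * f'_skew la mu)
      = (\<Sum>la\<in>{la\<in>skew_set mu k. nu \<in> add_box la}. 2 powi (ex2 nu mu) * of_nat (f_skew la mu))"
  proof (rule sum.cong)
    fix la assume "la \<in> {la\<in>skew_set mu k. nu \<in> add_box la}"
    then have "strict_part la" "nu \<in> add_box la" by (auto simp: skew_set_def)
    then show "wgt la nu * f'_skew la mu = 2 powi (ex2 nu mu) * of_nat (f_skew la mu)"
      using wgt_rel[of la nu mu] by (simp add: f'_alt mult.assoc[symmetric])
  qed simp
  also have "\<dots> = 2 powi (ex2 nu mu) * of_nat (f_skew nu mu)"
    by (simp add: f_rec[OF smu nu] sum_distrib_left)
  finally show ?thesis by (simp add: f'_alt)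
qed

lemma step:
  assumes smu: "strict_part mu"
  shows "(\<Sum>la\<in>skew_set mu (Suc k). f'_skew la mu * g la)
       = (\<Sum>la\<in>skew_set mu k. f'_skew la mu * g la) + (\<Sum>la\<in>skew_set mu k. f'_skew la mu * Dop g la)"
proof -
  let ?h = "\<lambda>la nu. f'_skew la mu * wgt la nu * g nu"
  have ab: "add_box la = {nu\<in>skew_set mu (Suc k). nu \<in> add_box la}" if "la \<in> skew_set mu k" for la
    using that contains_trans unfolding skew_set_def add_box_def by auto
  have "(\<Sum>la\<in>skew_set mu k. f'_skew la mu * Dop g la)
      = (\<Sum>la\<in>skew_set mu k. (\<Sum>nu\<in>add_box la. ?h la nu) - f'_skew la mu * g la)"
  proof (rule sum.cong)
    fix la assume "la \<in> skew_set mu k"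
    then have "strict_part la" by (simp add: skew_set_def)
    then show "f'_skew la mu * Dop g la = (\<Sum>nu\<in>add_box la. ?h la nu) - f'_skew la mu * g la"
      by (simp add: Dop_alt right_diff_distrib sum_distrib_left mult.assoc)
  qed simp
  also have "\<dots> = (\<Sum>la\<in>skew_set mu k. \<Sum>nu\<in>add_box la. ?h la nu) - (\<Sum>la\<in>skew_set mu k. f'_skew la mu * g la)"
    by (simp add: sum_subtractf)
  also have "(\<Sum>la\<in>skew_set mu k. \<Sum>nu\<in>add_box la. ?h la nu)
      = (\<Sum>la\<in>skew_set mu k. \<Sum>nu\<in>{nu\<in>skew_set mu (Suc k). nu \<in> add_box la}. ?h la nu)"
    using ab by (intro sum.cong) auto
  also have "\<dots> = (\<Sum>nu\<in>skew_set mu (Suc k). \<Sum>la\<in>{la\<in>skew_set mu k. nu \<in> add_box la}. ?h la nu)"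
    by (rule sum.swap_restrict) (simp_all add: finite_skew_set)
  also have "\<dots> = (\<Sum>nu\<in>skew_set mu (Suc k). f'_skew nu mu * g nu)"
  proof (rule sum.cong)
    fix nu assume nu: "nu \<in> skew_set mu (Suc k)"
    show "(\<Sum>la\<in>{la\<in>skew_set mu k. nu \<in> add_box la}. ?h la nu) = f'_skew nu mu * g nu"
      unfolding f'_rec[OF smu nu] sum_distrib_right by (simp add: mult.commute mult.left_commute)
  qed simp
  finally show ?thesis by simp
qed

theorem lemma2p2:
  fixes mu :: "nat list" and g :: "nat list \<Rightarrow> complex" and n :: nat
  assumes "strict_part mu"
  shows "(\<Sum>la\<in>skew_set mu n. f'_skew la mu * g la)
       = (\<Sum>la\<in>skew_set mu 0. f'_skew la mu * g la)
         + (\<Sum>k<n. \<Sum>la\<in>skew_set mu k. f'_skew la mu * Dop g la)"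
proof (induction n)
  case 0 then show ?case by simp
next
  case (Suc n)
  then show ?case using step[OF assms, where k=n and g=g] by simp
qed

end
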